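(* For all $n\ge 2$, $\delta(n,2)=n-1$.
   Context: Strings here are arbitrary (not normalized) finite words. The prefix reversal (flip) $f^{(i)}$ applied to $s=s_1\cdots s_n$ ($1\le i\le n$) yields $s_i s_{i-1}\cdots s_1 s_{i+1}\cdots s_n$. Two strings are \emph{compatible} if each symbol occurs the same number of times in both. For compatible $s,t$, $d(s,t)$ is the minimum number of prefix reversals transforming $s$ into $t$. $S(n,k)$ is the set of strings of length $n$ whose set of occurring symbols is exactly $\{0,\dots,k-1\}$, and $\delta(n,k)$ is the maximum of $d(s,t)$ over all compatible pairs $s,t\in S(n,k)$. *)

theory Defs
  imports "HOL-Library.Multiset"
begin

definition flip :: "nat \<Rightarrow> nat list \<Rightarrow> nat list" where
  "flip i s = rev (take i s) @ drop i s"

definition apply_flips :: "nat list \<Rightarrow> nat list \<Rightarrow> nat list" where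
  "apply_flips is s = fold flip is s"

definition compatible :: "nat list \<Rightarrow> nat list \<Rightarrow> bool" where
  "compatible s t \<longleftrightarrow> mset s = mset t"

definition flips_to :: "nat list \<Rightarrow> nat list \<Rightarrow> nat \<Rightarrow> bool" where
  "flips_to s t m \<longleftrightarrow>
     (\<exists>is. length is = m \<and> (\<forall>i\<in>set is. 1 \<le> i \<and> i \<le> length s) \<and> apply_flips is s = t)"

definition flip_dist :: "nat list \<Rightarrow> nat list \<Rightarrow> nat" where
  "flip_dist s t = (LEAST m. flips_to s t m)"

definition S_set :: "nat \<Rightarrow> nat \<Rightarrow> nat list set" where
  "S_set n k = {s. length s = n \<and> set s = {0..<k}}"

definition delta :: "nat \<Rightarrow> nat \<Rightarrow> nat" where
  "delta n k = Max {flip_dist s t | s t. s \<in> S_set n k \<and> t \<in> S_set n k \<and> compatible s t}"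

end

theory Submission
  imports Defs
begin

lemma length_flip[simp]: "length (flip i s) = length s"
  by (simp add: flip_def)

lemma apply_flips_Nil[simp]: "apply_flips [] s = s"
  by (simp add: apply_flips_def)

lemma apply_flips_Cons[simp]: "apply_flips (i # fs) s = apply_flips fs (flip i s)"
  by (simp add: apply_flips_def)

lemma apply_flips_app: "apply_flips (fs @ gs) s = apply_flips gs (apply_flips fs s)"
  by (simp add: apply_flips_def)

lemma length_apply_flips[simp]: "length (apply_flips fs s) = length s"
  by (induction fs arbitrary: s) auto

lemma flip_full: "flip (length s) s = rev s"
  by (simp add: flip_def)

lemma flip_append: "i \<le> length p \<Longrightarrow> flip i (p @ q) = flip i p @ q"
  by (simp add: flip_def)

lemma apply_flips_append_list:
  "\<forall>i\<in>set fs. i \<le> length p \<Longrightarrow> apply_flips fs (p @ q) = apply_flips fs p @ q"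
  by (induction fs arbitrary: p) (auto simp: flip_append)

lemma flip_flip: "i \<le> length s \<Longrightarrow> flip i (flip i s) = s"
  by (simp add: flip_def)

lemma apply_flips_rev:
  "\<forall>i\<in>set fs. i \<le> length s \<Longrightarrow> apply_flips (rev fs) (apply_flips fs s) = s"
  by (induction fs arbitrary: s) (auto simp: apply_flips_app flip_flip)

definition reach :: "nat list \<Rightarrow> nat list \<Rightarrow> bool" where
  "reach s t \<longleftrightarrow> (\<exists>fs. length fs \<le> length s - 1 \<and> (\<forall>i\<in>set fs. 1 \<le> i \<and> i \<le> length s)
      \<and> apply_flips fs s = t)"

lemma reach_sym: "reach s t \<Longrightarrow> reach t s"
  unfolding reach_def
proof (elim exE conjE)
  fix fs assume a: "length fs \<le> length s - 1" "\<forall>i\<in>set fs. 1 \<le> i \<and> i \<le> length s"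
    "apply_flips fs s = t"
  have l: "length t = length s" using a(3) by auto
  show "\<exists>fs. length fs \<le> length t - 1 \<and> (\<forall>i\<in>set fs. 1 \<le> i \<and> i \<le> length t) \<and> apply_flips fs t = s"
    apply (rule exI[of _ "rev fs"])
    using a l apply_flips_rev[of fs s] by auto
qed

lemma reach_snoc: "reach s' t' \<Longrightarrow> reach (s' @ [x]) (t' @ [x])"
  unfolding reach_def
proof (elim exE conjE)
  fix fs assume a: "length fs \<le> length s' - 1" "\<forall>i\<in>set fs. 1 \<le> i \<and> i \<le> length s'"
    "apply_flips fs s' = t'"
  show "\<exists>fs. length fs \<le> length (s' @ [x]) - 1 \<and> (\<forall>i\<in>set fs. 1 \<le> i \<and> i \<le> length (s' @ [x]))
     \<and> apply_flips fs (s' @ [x]) = t' @ [x]"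
    apply (rule exI[of _ fs])
    using a apply_flips_append_list[of fs s' "[x]"] by auto
qed

lemma reach_F:
  assumes "length s \<ge> 2" "reach (butlast (rev s)) t'" "last (rev s) = y"
  shows "reach s (t' @ [y])"
proof -
  from assms(2) obtain fs where a: "length fs \<le> length (butlast (rev s)) - 1"
    "\<forall>i\<in>set fs. 1 \<le> i \<and> i \<le> length (butlast (rev s))"
    "apply_flips fs (butlast (rev s)) = t'" unfolding reach_def by blast
  have "rev s \<noteq> []" using assms(1) by auto
  then have rs: "rev s = butlast (rev s) @ [y]" using assms(3)
    by (metis append_butlast_last_id)
  have "apply_flips (length s # fs) s = apply_flips fs (butlast (rev s) @ [y])"
    using rs by (simp add: flip_full)
  also have "\<dots> = t' @ [y]" using apply_flips_append_list[of fs "butlast (rev s)" "[y]"] a by auto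
  finally show ?thesis unfolding reach_def
    apply (intro exI[of _ "length s # fs"])
    using a assms(1) by auto
qed

lemma reach_H:
  assumes "s = u @ [p,q] @ v" "v \<noteq> []" "t = w @ [p,q]" "reach (rev v @ u) w"
  shows "reach s t"
proof -
  from assms(4) obtain fs where a: "length fs \<le> length (rev v @ u) - 1"
    "\<forall>i\<in>set fs. 1 \<le> i \<and> i \<le> length (rev v @ u)"
    "apply_flips fs (rev v @ u) = w" unfolding reach_def by blast
  have lv: "length v \<ge> 1" using assms(2) by (cases v) auto
  define k where "k = length u + 2"
  have f1: "flip k s = q # p # rev u @ v" using assms(1) by (simp add: flip_def k_def)
  have f2: "flip (length s) (q # p # rev u @ v) = rev v @ u @ [p, q]"
    using assms(1) by (simp add: flip_def)
  have "apply_flips (k # length s # fs) s = apply_flips fs ((rev v @ u) @ [p, q])"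
    using f1 f2 by simp
  also have "\<dots> = t" using apply_flips_append_list[of fs "rev v @ u" "[p,q]"] a assms(3) by auto
  finally show ?thesis unfolding reach_def
    apply (intro exI[of _ "k # length s # fs"])
    using a assms(1) lv k_def by auto
qed

lemma count_nobb:
  assumes "\<forall>u v. xs \<noteq> u @ y # y # v" "set xs \<subseteq> {x, y}"
  shows "count (mset xs) y \<le> count (mset xs) x + (if xs \<noteq> [] \<and> hd xs = y then 1 else 0)"
  using assms
proof (induction xs)
  case Nil
  then show ?case by simp
next
  case (Cons a xs)
  have nb: "\<forall>u v. xs \<noteq> u @ y # y # v"
  proof (intro allI)
    fix u v show "xs \<noteq> u @ y # y # v" using Cons.prems(1)[rule_format, of "a # u" v] by auto
  qed
  have IH: "count (mset xs) y \<le> count (mset xs) x + (if xs \<noteq> [] \<and> hd xs = y then 1 else 0)"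
    using Cons.IH nb Cons.prems(2) by auto
  show ?case
  proof (cases "a = y")
    case True
    have "\<not> (xs \<noteq> [] \<and> hd xs = y)"
    proof
      assume "xs \<noteq> [] \<and> hd xs = y"
      then have "xs = y # tl xs" by (cases xs) auto
      then show False using Cons.prems(1)[rule_format, of "[]" "tl xs"] True by auto
    qed
    then show ?thesis using IH True by auto
  next
    case False
    then have "a = x" using Cons.prems(2) by auto
    have "count (mset xs) y \<le> count (mset xs) x + 1" using IH by (auto split: if_splits)
    then show ?thesis using \<open>a = x\<close> False by auto
  qed
qed

lemma main:
  "length s = n \<Longrightarrow> mset s = mset t \<Longrightarrow> set s \<subseteq> {0,1} \<Longrightarrow> reach s t"
proof (induction n arbitrary: s t rule: less_induct)
  case (less n)
  have lt: "length t = n" using less.prems(1,2) by (metis size_mset)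
  have sett: "set t = set s" using less.prems(2) by (metis set_mset_mset)
  have t01: "set t \<subseteq> {0,1}" using sett less.prems(3) by simp
  show ?case
  proof (cases "s = []")
    case True
    then have "t = []" using less.prems(2) by simp
    then show ?thesis using True unfolding reach_def by (intro exI[of _ "[]"]) simp
  next
    case sne: False
    obtain s' x where sx: "s = s' @ [x]" using sne by (metis rev_exhaust)
    have "t \<noteq> []" using sne lt less.prems(1) by auto
    then obtain t' y where ty: "t = t' @ [y]" by (metis rev_exhaust)
    have ln: "length s' < n" "length t' < n" using sx ty less.prems(1) lt by auto
    have x01: "x \<in> {0,1}" using sx less.prems(3) by auto
    have y01: "y \<in> {0,1}" using ty t01 by auto
    show ?thesis
    proof (cases "x = y")
      case True
      have "mset s' = mset t'" using less.prems(2) sx ty True by simp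
      then have "reach s' t'" using less.IH[OF ln(1) refl] less.prems(3) sx by auto
      then show ?thesis using sx ty True reach_snoc by simp
    next
      case xy: False
      have xy01: "{0,1} = {x,y}" using x01 y01 xy by auto
      have yins: "y \<in> set s" using sett ty by auto
      have xint: "x \<in> set t" using sett sx by auto
      obtain h s0 where hs: "s = h # s0" using sne by (cases s) auto
      obtain g t0 where gt: "t = g # t0" using \<open>t \<noteq> []\<close> by (cases t) auto
      have lasts: "last s = x" using sx by simp
      have lastt: "last t = y" using ty by simp
      show ?thesis
      proof (cases "h = y")
        case True
        have s0ne: "s0 \<noteq> []" using hs sx True xy by auto
        have "mset (rev s0) = mset t'" using less.prems(2) hs ty True by simp
        moreover have "length (rev s0) < n" using hs less.prems(1) by auto
        moreover have "set (rev s0) \<subseteq> {0,1}" using hs less.prems(3) by auto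
        ultimately have "reach (rev s0) t'" using less.IH by blast
        then have "reach (butlast (rev s)) t'" using hs by simp
        moreover have "length s \<ge> 2" using hs s0ne by (cases s0) auto
        ultimately show ?thesis using reach_F[of s t' y] ty hs True by simp
      next
        case hny: False
        then have hx: "h = x" using hs less.prems(3) xy01 by auto
        show ?thesis
        proof (cases "g = x")
          case True
          have t0ne: "t0 \<noteq> []" using gt ty True xy by auto
          have "mset (rev t0) = mset s'" using less.prems(2) gt sx True by simp
          moreover have "length (rev t0) < n" using gt lt by auto
          moreover have "set (rev t0) \<subseteq> {0,1}" using gt t01 by auto
          ultimately have "reach (rev t0) s'" using less.IH by blast
          then have "reach (butlast (rev t)) s'" using gt by simp
          moreover have "length t \<ge> 2" using gt t0ne by (cases t0) auto
          ultimately have "reach t s" using reach_F[of t s' x] sx gt True by simp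
          then show ?thesis by (rule reach_sym)
        next
          case gnx: False
          then have gy: "g = y" using gt t01 xy01 by auto
          have "s' \<noteq> []"
          proof
            assume "s' = []"
            then have "s = [x]" using sx by simp
            then have "t = [x]" using less.prems(2) by simp
            then show False using ty xy by simp
          qed
          then obtain s'' w where sw: "s' = s'' @ [w]" by (metis rev_exhaust)
          have "t' \<noteq> []"
          proof
            assume "t' = []"
            then have "t = [y]" using ty by simp
            then have "s = [y]" using less.prems(2) by simp
            then show False using sx xy by simp
          qed
          then obtain t'' z where tz: "t' = t'' @ [z]" by (metis rev_exhaust)
          have w01: "w \<in> {x,y}" using sx sw less.prems(3) xy01 by auto
          have z01: "z \<in> {x,y}" using ty tz t01 xy01 by auto
          show ?thesis
          proof (cases "z = x")
            case zx: True
            obtain A B where AB: "s = A @ y # B" "y \<notin> set A"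
              using split_list_first[OF yins] by blast
            have "A \<noteq> []" using AB hs hny by auto
            then obtain A' a' where Aa: "A = A' @ [a']" by (metis rev_exhaust)
            have "a' \<in> {x,y}" using AB Aa less.prems(3) xy01 by auto
            then have ax: "a' = x" using AB Aa by auto
            have Bne: "B \<noteq> []" using AB lasts xy by auto
            have s_eq: "s = A' @ [x,y] @ B" using AB Aa ax by simp
            have t_eq: "t = t'' @ [x,y]" using ty tz zx by simp
            have "mset (rev B @ A') = mset t''" using less.prems(2) s_eq t_eq by (simp add: ac_simps)
            moreover have "length (rev B @ A') < n" using s_eq less.prems(1) by auto
            moreover have "set (rev B @ A') \<subseteq> {0,1}" using s_eq less.prems(3) by auto
            ultimately have "reach (rev B @ A') t''" using less.IH by blast
            then show ?thesis using reach_H[OF s_eq Bne t_eq] by simp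
          next
            case znx: False
            then have zy: "z = y" using z01 by auto
            show ?thesis
            proof (cases "w = y")
              case wy: True
              obtain A B where AB: "t = A @ x # B" "x \<notin> set A"
                using split_list_first[OF xint] by blast
              have "A \<noteq> []" using AB gt gnx by auto
              then obtain A' a' where Aa: "A = A' @ [a']" by (metis rev_exhaust)
              have "a' \<in> {x,y}" using AB Aa t01 xy01 by auto
              then have ay: "a' = y" using AB Aa by auto
              have Bne: "B \<noteq> []" using AB lastt xy by auto
              have t_eq: "t = A' @ [y,x] @ B" using AB Aa ay by simp
              have s_eq: "s = s'' @ [y,x]" using sx sw wy by simp
              have "mset (rev B @ A') = mset s''" using less.prems(2) s_eq t_eq by (simp add: ac_simps)
              moreover have "length (rev B @ A') < n" using t_eq lt by auto
              moreover have "set (rev B @ A') \<subseteq> {0,1}" using t_eq t01 by auto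
              ultimately have "reach (rev B @ A') s''" using less.IH by blast
              then have "reach t s" using reach_H[OF t_eq Bne s_eq] by simp
              then show ?thesis by (rule reach_sym)
            next
              case wny: False
              then have wx: "w = x" using w01 by auto
              show ?thesis
              proof (cases "\<exists>u v. s = u @ y # y # v")
                case True
                then obtain u v where uv: "s = u @ [y,y] @ v" by auto
                have vne: "v \<noteq> []" using uv lasts xy by auto
                have t_eq: "t = t'' @ [y,y]" using ty tz zy by simp
                have "mset (rev v @ u) = mset t''" using less.prems(2) uv t_eq by (simp add: ac_simps)
                moreover have "length (rev v @ u) < n" using uv less.prems(1) by auto
                moreover have "set (rev v @ u) \<subseteq> {0,1}" using uv less.prems(3) by auto
                ultimately have "reach (rev v @ u) t''" using less.IH by blast
                then show ?thesis using reach_H[OF uv vne t_eq] by simp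
              next
                case noyy: False
                show ?thesis
                proof (cases "\<exists>u v. t = u @ x # x # v")
                  case True
                  then obtain u v where uv: "t = u @ [x,x] @ v" by auto
                  have vne: "v \<noteq> []" using uv lastt xy by auto
                  have s_eq: "s = s'' @ [x,x]" using sx sw wx by simp
                  have "mset (rev v @ u) = mset s''" using less.prems(2) uv s_eq by (simp add: ac_simps)
                  moreover have "length (rev v @ u) < n" using uv lt by auto
                  moreover have "set (rev v @ u) \<subseteq> {0,1}" using uv t01 by auto
                  ultimately have "reach (rev v @ u) s''" using less.IH by blast
                  then have "reach t s" using reach_H[OF uv vne s_eq] by simp
                  then show ?thesis by (rule reach_sym)
                next
                  case noxx: False
                  have nb1: "\<forall>u v. s' \<noteq> u @ y # y # v"
                  proof (intro allI notI)
                    fix u v assume "s' = u @ y # y # v"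
                    then have "s = u @ y # y # (v @ [x])" using sx by simp
                    then show False using noyy by blast
                  qed
                  have nb2: "\<forall>u v. t' \<noteq> u @ x # x # v"
                  proof (intro allI notI)
                    fix u v assume "t' = u @ x # x # v"
                    then have "t = u @ x # x # (v @ [y])" using ty by simp
                    then show False using noxx by blast
                  qed
                  have hs': "hd s' = x" using hs hx \<open>s' \<noteq> []\<close> sx by (cases s') auto
                  have ht': "hd t' = y" using gt gy \<open>t' \<noteq> []\<close> ty by (cases t') auto
                  have c1: "count (mset s') y \<le> count (mset s') x"
                    using count_nobb[OF nb1, of x] sx less.prems(3) xy01 hs' xy by auto
                  have c2: "count (mset t') x \<le> count (mset t') y"
                    using count_nobb[OF nb2, of y] ty t01 xy01 ht' xy by auto
                  have e1: "count (mset s) y = count (mset t) y" using less.prems(2) by simp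
                  have e2: "count (mset s) x = count (mset t) x" using less.prems(2) by simp
                  show ?thesis using c1 c2 e1 e2 sx ty xy by auto
                qed
              qed
            qed
          qed
        qed
      qed
    qed
  qed
qed


fun dif :: "nat list \<Rightarrow> nat" where
  "dif (a # b # zs) = (if a = b then 0 else 1) + dif (b # zs)"
| "dif _ = 0"

lemma dif_Cons: "ys \<noteq> [] \<Longrightarrow> dif (a # ys) = (if a = hd ys then 0 else 1) + dif ys"
  by (cases ys) auto

lemma dif_append:
  "p \<noteq> [] \<Longrightarrow> q \<noteq> [] \<Longrightarrow> dif (p @ q) = dif p + (if last p = hd q then 0 else 1) + dif q"
proof (induction p)
  case Nil
  then show ?case by simp
next
  case (Cons a p)
  show ?case
  proof (cases "p = []")
    case True
    then show ?thesis using dif_Cons[OF Cons.prems(2)] by simp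
  next
    case False
    have "dif ((a # p) @ q) = (if a = hd p then 0 else 1) + dif (p @ q)"
      using dif_Cons[of "p @ q" a] False by simp
    also have "\<dots> = (if a = hd p then 0 else 1) + dif p + (if last p = hd q then 0 else 1) + dif q"
      using Cons.IH[OF False Cons.prems(2)] by simp
    also have "\<dots> = dif (a # p) + (if last (a # p) = hd q then 0 else 1) + dif q"
      using dif_Cons[OF False, of a] False by simp
    finally show ?thesis .
  qed
qed

lemma dif_rev: "dif (rev p) = dif p"
proof (induction p)
  case Nil
  then show ?case by simp
next
  case (Cons a p)
  show ?case
  proof (cases "p = []")
    case True
    then show ?thesis by simp
  next
    case False
    have "dif (rev (a # p)) = dif (rev p @ [a])" by simp
    also have "\<dots> = dif (rev p) + (if last (rev p) = a then 0 else 1)"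
      using dif_append[of "rev p" "[a]"] False by simp
    also have "\<dots> = dif (a # p)" using Cons.IH dif_Cons[OF False, of a] False
      by (simp add: last_rev)
    finally show ?thesis .
  qed
qed

lemma flip_dif:
  assumes "1 \<le> i" "i \<le> length s"
  shows "dif (s @ [c]) \<le> dif (flip i s @ [c]) + 1"
proof -
  define p where "p = take i s"
  define q where "q = drop i s @ [c]"
  have pne: "p \<noteq> []" using assms p_def by auto
  have qne: "q \<noteq> []" using q_def by simp
  have "s @ [c] = p @ q" using p_def q_def by simp
  then have "dif (s @ [c]) = dif p + (if last p = hd q then 0 else 1) + dif q"
    using dif_append[OF pne qne] by simp
  moreover have "flip i s @ [c] = rev p @ q" using p_def q_def by (simp add: flip_def)
  then have "dif (flip i s @ [c]) = dif p + (if last (rev p) = hd q then 0 else 1) + dif q"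
    using dif_append[of "rev p" q] pne qne dif_rev by simp
  ultimately show ?thesis by simp
qed

lemma apply_flips_dif:
  "\<forall>i\<in>set fs. 1 \<le> i \<and> i \<le> length s \<Longrightarrow> dif (s @ [c]) \<le> dif (apply_flips fs s @ [c]) + length fs"
proof (induction fs arbitrary: s)
  case Nil
  then show ?case by simp
next
  case (Cons i fs)
  have "dif (s @ [c]) \<le> dif (flip i s @ [c]) + 1" using Cons.prems flip_dif by simp
  moreover have "dif (flip i s @ [c]) \<le> dif (apply_flips fs (flip i s) @ [c]) + length fs"
    using Cons.IH[of "flip i s"] Cons.prems by simp
  ultimately show ?case by simp
qed

fun alt :: "nat \<Rightarrow> nat list" where
  "alt 0 = []"
| "alt (Suc k) = (k mod 2) # alt k"

lemma length_alt: "length (alt k) = k"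
  by (induction k) auto

lemma dif_alt: "dif (alt k @ [1]) = k"
proof (induction k)
  case 0
  then show ?case by simp
next
  case (Suc k)
  show ?case
  proof (cases k)
    case 0
    then show ?thesis by simp
  next
    case (Suc m)
    have "alt (Suc k) @ [1] = (k mod 2) # (m mod 2) # (alt m @ [1])" using Suc by simp
    moreover have "k mod 2 \<noteq> m mod 2" using Suc by presburger
    ultimately show ?thesis using Suc.IH \<open>k = Suc m\<close> by simp
  qed
qed

lemma mset_alt: "mset (alt k) = replicate_mset ((k + 1) div 2) 0 + replicate_mset (k div 2) 1"
proof (induction k)
  case 0
  then show ?case by simp
next
  case (Suc k)
  have m: "mset (alt (Suc k)) = add_mset (k mod 2) (mset (alt k))" by simp
  show ?case
  proof (cases "even k")
    case True
    then have e: "(Suc k + 1) div 2 = Suc ((k + 1) div 2)" "Suc k div 2 = k div 2" "k mod 2 = 0"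
      by presburger+
    show ?thesis unfolding m Suc.IH e by simp
  next
    case False
    then have e: "(Suc k + 1) div 2 = (k + 1) div 2" "Suc k div 2 = Suc (k div 2)" "k mod 2 = 1"
      by presburger+
    show ?thesis unfolding m Suc.IH e by simp
  qed
qed

definition tgt :: "nat \<Rightarrow> nat list" where
  "tgt n = replicate ((n + 1) div 2) 0 @ replicate (n div 2) 1"

lemma dif_replicate: "dif (replicate k a) = 0"
proof (induction k)
  case 0
  then show ?case by simp
next
  case (Suc k)
  then show ?case by (cases k) auto
qed

lemma dif_tgt: assumes "n \<ge> 2" shows "dif (tgt n @ [1]) = 1"
proof -
  define a where "a = (n + 1) div 2"
  define b where "b = Suc (n div 2)"
  have a0: "a \<noteq> 0" using assms a_def by simp
  have q: "replicate (n div 2) (1::nat) @ [1] = replicate b 1"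
    unfolding b_def by (simp add: replicate_append_same)
  have e: "tgt n @ [1] = replicate a 0 @ replicate b 1"
    unfolding tgt_def a_def by (simp only: append_assoc q)
  have p1: "replicate a (0::nat) \<noteq> []" using a0 by simp
  have p2: "replicate b (1::nat) \<noteq> []" using b_def by simp
  have l: "last (replicate a (0::nat)) = 0" using a0 by simp
  have h: "hd (replicate b (1::nat)) = 1" using b_def by simp
  have "dif (replicate a 0 @ replicate b 1) = 1"
    using dif_append[OF p1 p2] l h dif_replicate[of b 1] dif_replicate[of a 0] by simp
  then show ?thesis using e by simp
qed

theorem theorem5p1:
  fixes n :: nat
  assumes "n \<ge> 2"
  shows "delta n 2 = n - 1"
proof -
  define A where "A = {flip_dist s t | s t. s \<in> S_set n 2 \<and> t \<in> S_set n 2 \<and> compatible s t}"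
  have e: "{0..<2::nat} = {0,1}" by auto
  have fin: "finite A"
  proof -
    have "S_set n 2 \<subseteq> {xs. set xs \<subseteq> {0,1} \<and> length xs = n}" unfolding S_set_def e by blast
    moreover have "finite {xs. set xs \<subseteq> {0::nat,1} \<and> length xs = n}"
      by (rule finite_lists_length_eq) simp
    ultimately have fS: "finite (S_set n 2)" by (rule finite_subset)
    have "A \<subseteq> (\<lambda>(s,t). flip_dist s t) ` (S_set n 2 \<times> S_set n 2)"
    proof
      fix d assume "d \<in> A"
      then obtain s t where st: "d = flip_dist s t" "s \<in> S_set n 2" "t \<in> S_set n 2"
        unfolding A_def by blast
      show "d \<in> (\<lambda>(s,t). flip_dist s t) ` (S_set n 2 \<times> S_set n 2)"
        by (rule image_eqI[of _ _ "(s,t)"]) (use st in auto)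
    qed
    moreover have "finite ((\<lambda>(s,t). flip_dist s t) ` (S_set n 2 \<times> S_set n 2))" using fS by simp
    ultimately show ?thesis by (rule finite_subset)
  qed
  have reach_flips: "flips_to s t (length fs)" if "length fs \<le> length s - 1"
    "\<forall>i\<in>set fs. 1 \<le> i \<and> i \<le> length s" "apply_flips fs s = t" for s t fs
    unfolding flips_to_def using that by blast
  have ub: "flip_dist s t \<le> n - 1" if "s \<in> S_set n 2" "t \<in> S_set n 2" "compatible s t" for s t
  proof -
    have "reach s t" using main[of s n t] that unfolding S_set_def compatible_def e by simp
    then obtain fs where fs: "length fs \<le> length s - 1" "\<forall>i\<in>set fs. 1 \<le> i \<and> i \<le> length s"
      "apply_flips fs s = t" unfolding reach_def by blast
    then have "flips_to s t (length fs)" by (rule reach_flips)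
    then have "flip_dist s t \<le> length fs" unfolding flip_dist_def by (rule Least_le)
    then show ?thesis using fs(1) that(1) unfolding S_set_def by auto
  qed
  define s where "s = alt n"
  define t where "t = tgt n"
  have ms: "mset s = mset t" unfolding s_def t_def tgt_def by (simp add: mset_alt)
  have ls: "length s = n" unfolding s_def by (simp add: length_alt)
  have a1: "(n + 1) div 2 \<noteq> 0" "n div 2 \<noteq> 0" using assms by auto
  have sett: "set t = {0,1}" unfolding t_def tgt_def using a1 by auto
  have sets: "set s = {0,1}" using sett ms by (metis set_mset_mset)
  have lt: "length t = n" using ms ls by (metis size_mset)
  have sS: "s \<in> S_set n 2" "t \<in> S_set n 2" using sets sett ls lt unfolding S_set_def e by simp_all
  have cst: "compatible s t" using ms unfolding compatible_def by simp
  have lb: "flip_dist s t \<ge> n - 1"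
  proof -
    have "reach s t" using main[of s n t] ls ms sets by auto
    then obtain fs where fs: "length fs \<le> length s - 1" "\<forall>i\<in>set fs. 1 \<le> i \<and> i \<le> length s"
      "apply_flips fs s = t" unfolding reach_def by blast
    then have "\<exists>m. flips_to s t m" using reach_flips by blast
    then have "flips_to s t (flip_dist s t)" unfolding flip_dist_def by (rule LeastI_ex)
    then obtain gs where gs: "length gs = flip_dist s t" "\<forall>i\<in>set gs. 1 \<le> i \<and> i \<le> length s"
      "apply_flips gs s = t" unfolding flips_to_def by blast
    have "dif (s @ [1]) \<le> dif (t @ [1]) + length gs" using apply_flips_dif[OF gs(2), of 1] gs(3)
      by simp
    then show ?thesis using dif_alt[of n] dif_tgt[OF assms] gs(1) unfolding s_def t_def by simp
  qed
  have mem: "n - 1 \<in> A"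
  proof -
    have "flip_dist s t = n - 1" using lb ub[OF sS cst] by simp
    then have "n - 1 = flip_dist s t \<and> s \<in> S_set n 2 \<and> t \<in> S_set n 2 \<and> compatible s t"
      using sS cst by simp
    then show ?thesis unfolding A_def by blast
  qed
  have "Max A = n - 1"
  proof (rule Max_eqI[OF fin])
    fix d assume "d \<in> A"
    then obtain s t where st: "d = flip_dist s t" "s \<in> S_set n 2" "t \<in> S_set n 2" "compatible s t"
      unfolding A_def by blast
    then show "d \<le> n - 1" using ub by simp
  next
    show "n - 1 \<in> A" by (rule mem)
  qed
  then show ?thesis unfolding delta_def A_def by simp
qed

end
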